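(* Let $0<p<q$ be relatively prime integers and let $\mathcal{G}$ be the Markov snake graph of slope $p/q$. Then $\mathcal{G}$ has a rotational symmetry at its center tile. Moreover: (1) $\mathcal{G}$ has exactly $p$ horizontal segments, and there are positive integers $\nu_1,\dots,\nu_p$ with $|\nu_i-\nu_j|\le1$ for all $i\ne j$ such that the $i$-th horizontal segment has exactly $2(\nu_i-1)+3$ tiles; (2) $\mathcal{G}$ has exactly $p-1$ vertical segments, each of which has exactly $3$ tiles.
   Context: A tile is a unit square in the plane with sides parallel to the axes, viewed as a graph with 4 vertices and 4 edges. A snake graph with $d\ge1$ tiles is the union of tiles $G_1,\dots,G_d$ with each $G_{i+1}$ the translate of $G_i$ by $(0,1)$ or $(1,0)$, so that $G_i,G_{i+1}$ share exactly one edge $e_i$. A sign function on a snake graph is a map $f$ from edges to $\{+,-\}$ such that in each tile the north and west edges have the same sign, the south and east edges have the same sign, and north and south edges have opposite signs. For positive integers $a_1,\dots,a_n$ with $d=a_1+\dots+a_n-1\ge1$, $\mathcal{G}[a_1,\dots,a_n]$ is the unique snake graph with tiles $G_1,\dots,G_d$ admitting a sign function $f$ and an edge $e_d\in\{\text{north edge of }G_d,\text{east edge of }G_d\}$ such that, with $e_0$ the south edge of $G_1$, the sequence $(f(e_0),\dots,f(e_d))$ consists of $a_1$ copies of a sign $s$, then $a_2$ copies of $-s$, then $a_3$ copies of $s$, etc. For relatively prime integers $0<p<q$ put $v_i=\lfloor iq/p\rfloor-\lfloor (i-1)q/p\rfloor$ for $1\le i\le p-1$ and $v_p=q-1-\lfloor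 (p-1)q/p\rfloor$. The Markov snake graph of slope $p/q$ is $\mathcal{G}[c]$, where $c$ is the sequence $2,\,1^{2(v_1-1)},\,2,2,\,1^{2(v_2-1)},\,2,2,\dots,2,2,\,1^{2(v_p-1)},\,2$ ($1^k$ denotes $k$ consecutive entries equal to 1). A snake graph has a rotational symmetry at its center tile if some tile $G_i$ is such that rotation by $180^\circ$ about the center of $G_i$ maps the graph onto itself. A horizontal (resp. vertical) segment is a maximal run $G_j,G_{j+1},\dots,G_k$ of at least two consecutive tiles such that each $G_{l+1}$ ($j\le l<k$) is east (resp. north) of $G_l$; segments are ordered along the snake graph. *)

theory Defs
  imports Main "HOL-Library.Product_Lexorder"
begin

text \<open>A point of the integer lattice; a tile is identified by its lower-left corner.
  An edge is a unit segment, stored as the pair of its endpoints with the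
  lower/left endpoint first.\<close>

type_synonym point = "int \<times> int"
type_synonym edge = "point \<times> point"

definition south :: "point \<Rightarrow> edge" where
  "south t = ((fst t, snd t), (fst t + 1, snd t))"
definition north :: "point \<Rightarrow> edge" where
  "north t = ((fst t, snd t + 1), (fst t + 1, snd t + 1))"
definition west :: "point \<Rightarrow> edge" where
  "west t = ((fst t, snd t), (fst t, snd t + 1))"
definition east :: "point \<Rightarrow> edge" where
  "east t = ((fst t + 1, snd t), (fst t + 1, snd t + 1))"

definition tile_edges :: "point \<Rightarrow> edge set" where
  "tile_edges t = {south t, north t, west t, east t}"

definition north_of :: "point \<Rightarrow> point" where
  "north_of t = (fst t, snd t + 1)"
definition east_of :: "point \<Rightarrow> point" where
  "east_of t = (fst t + 1, snd t)"

text \<open>A snake graph with d = length ts tiles G_1,...,G_d (G_i = ts ! (i-1)):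
  each tile is the translate of the previous by (0,1) or (1,0).\<close>
definition snake :: "point list \<Rightarrow> bool" where
  "snake ts \<longleftrightarrow> ts \<noteq> [] \<and>
     (\<forall>i. Suc i < length ts \<longrightarrow> ts ! Suc i = north_of (ts ! i) \<or> ts ! Suc i = east_of (ts ! i))"

definition snake_edges :: "point list \<Rightarrow> edge set" where
  "snake_edges ts = (\<Union>t\<in>set ts. tile_edges t)"

definition shared_edge :: "point \<Rightarrow> point \<Rightarrow> edge" where
  "shared_edge t t' = (if t' = north_of t then north t else east t)"

text \<open>Sign function: signs + / - encoded as True / False.\<close>
definition sign_function :: "point list \<Rightarrow> (edge \<Rightarrow> bool) \<Rightarrow> bool" where
  "sign_function ts f \<longleftrightarrow> (\<forall>t\<in>set ts.
      f (north t) = f (west t) \<and> f (south t) = f (east t) \<and> f (north t) \<noteq> f (south t))"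

definition edge_seq :: "point list \<Rightarrow> edge \<Rightarrow> edge list" where
  "edge_seq ts ed = [south (hd ts)] @ map (\<lambda>i. shared_edge (ts ! i) (ts ! Suc i)) [0..<length ts - 1] @ [ed]"

definition sign_pattern :: "bool \<Rightarrow> nat list \<Rightarrow> bool list" where
  "sign_pattern s a = concat (map (\<lambda>k. replicate (a ! k) (if even k then s else \<not> s)) [0..<length a])"

text \<open>ts is (a translate of) the snake graph G[a_1,...,a_n].\<close>
definition is_snake_of_cf :: "nat list \<Rightarrow> point list \<Rightarrow> bool" where
  "is_snake_of_cf a ts \<longleftrightarrow> snake ts \<and> (\<forall>x\<in>set a. x > 0) \<and>
     length ts = sum_list a - 1 \<and> length ts \<ge> 1 \<and>
     (\<exists>f ed s. sign_function ts f \<and> ed \<in> {north (last ts), east (last ts)} \<and>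
        map f (edge_seq ts ed) = sign_pattern s a)"

definition markov_v :: "nat \<Rightarrow> nat \<Rightarrow> nat \<Rightarrow> nat" where
  "markov_v p q i = (if i < p then i * q div p - (i - 1) * q div p
                     else q - 1 - (p - 1) * q div p)"

definition markov_cf :: "nat \<Rightarrow> nat \<Rightarrow> nat list" where
  "markov_cf p q = concat (map (\<lambda>i. [2] @ replicate (2 * (markov_v p q i - 1)) 1 @ [2]) [1..<Suc p])"

definition markov_snake :: "nat \<Rightarrow> nat \<Rightarrow> point list \<Rightarrow> bool" where
  "markov_snake p q ts \<longleftrightarrow> is_snake_of_cf (markov_cf p q) ts"

text \<open>Rotation by 180 degrees about the centre of the tile with lower-left corner c.\<close>
definition rot180 :: "point \<Rightarrow> point \<Rightarrow> point" where
  "rot180 c v = (2 * fst c + 1 - fst v, 2 * snd c + 1 - snd v)"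

definition rot180_edge :: "point \<Rightarrow> edge \<Rightarrow> edge" where
  "rot180_edge c e = (rot180 c (snd e), rot180 c (fst e))"

definition rotationally_symmetric_at_tile :: "point list \<Rightarrow> bool" where
  "rotationally_symmetric_at_tile ts \<longleftrightarrow>
     (\<exists>i < length ts. rot180_edge (ts ! i) ` snake_edges ts = snake_edges ts)"

text \<open>Horizontal (vertical) segments, as pairs (j,k) of 0-based tile indices:
  maximal runs ts!j, ..., ts!k with k > j, each step going east (north).\<close>
definition segments :: "(point \<Rightarrow> point) \<Rightarrow> point list \<Rightarrow> (nat \<times> nat) set" where
  "segments step ts = {(j, k). j < k \<and> k < length ts \<and>
      (\<forall>l. j \<le> l \<and> l < k \<longrightarrow> ts ! Suc l = step (ts ! l)) \<and>
      (j = 0 \<or> ts ! j \<noteq> step (ts ! (j - 1))) \<and>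
      (Suc k = length ts \<or> ts ! Suc k \<noteq> step (ts ! k))}"

definition hsegments :: "point list \<Rightarrow> (nat \<times> nat) set" where
  "hsegments ts = segments east_of ts"
definition vsegments :: "point list \<Rightarrow> (nat \<times> nat) set" where
  "vsegments ts = segments north_of ts"

definition seg_list :: "(nat \<times> nat) set \<Rightarrow> (nat \<times> nat) list" where
  "seg_list S = sorted_list_of_set S"
definition seg_tiles :: "nat \<times> nat \<Rightarrow> nat" where
  "seg_tiles jk = snd jk - fst jk + 1"

end

theory Submission
  imports Defs
begin


lemma sp_nil[simp]: "sign_pattern s [] = []"
  by (simp add: sign_pattern_def)

lemma sp_cons: "sign_pattern s (x#xs) = replicate x s @ sign_pattern (\<not>s) xs"
proof -
  have "[0..<length (x#xs)] = 0 # map Suc [0..<length xs]"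
    by (simp add: upt_conv_Cons map_Suc_upt del: upt_Suc)
  then show ?thesis unfolding sign_pattern_def
    apply (simp add: comp_def)
    apply (rule arg_cong[where f=concat])
    apply (rule map_cong) by auto
qed

lemma sp_append: "sign_pattern s (xs@ys) = sign_pattern s xs @ sign_pattern (if even (length xs) then s else \<not>s) ys"
  by (induction xs arbitrary: s) (auto simp: sp_cons)

lemma sp_len: "length (sign_pattern s a) = sum_list a"
  by (induction a arbitrary: s) (auto simp: sp_cons)

fun run :: "bool \<Rightarrow> bool \<Rightarrow> bool list \<Rightarrow> bool list" where
  "run w x [] = []"
| "run w x (y#ys) = (let c = (w \<noteq> (x = y)) in c # run c y ys)"

lemma run_len[simp]: "length (run w x ys) = length ys"
  by (induction ys arbitrary: w x) (auto simp: Let_def)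

lemma run_nth: "i < length ys \<Longrightarrow> run w x ys ! i = ((if i = 0 then w else run w x ys ! (i-1)) \<noteq> ((x#ys)!i = ys!i))"
proof (induction ys arbitrary: w x i)
  case Nil then show ?case by simp
next
  case (Cons y ys)
  show ?case
  proof (cases i)
    case 0 then show ?thesis by (simp add: Let_def)
  next
    case (Suc j)
    then have "j < length ys" using Cons by simp
    from Cons.IH[OF this, of "(w \<noteq> (x = y))" y] Suc show ?thesis
      by (cases j) (auto simp: Let_def)
  qed
qed

definition alt :: "bool \<Rightarrow> nat \<Rightarrow> bool list" where
  "alt s k = concat (replicate k [s, \<not>s])"

definition spb :: "bool \<Rightarrow> nat \<Rightarrow> bool list" where
  "spb s v = [s,s] @ alt (\<not>s) (v-1) @ [\<not>s,\<not>s]"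

definition cfb :: "nat \<Rightarrow> nat list" where
  "cfb v = [2] @ replicate (2*(v-1)) 1 @ [2]"

lemma sp_rep1: "sign_pattern s (replicate (2*k) 1 @ ys) = alt s k @ sign_pattern s ys"
proof (induction k)
  case 0 then show ?case by (simp add: alt_def)
next
  case (Suc k)
  have "replicate (2 * Suc k) (1::nat) = [1,1] @ replicate (2*k) 1" by simp
  then show ?case using Suc by (simp add: sp_cons alt_def)
qed

lemma sp_cfb: "sign_pattern s (cfb v) = spb s v"
proof -
  have "sign_pattern (\<not>s) (replicate (2 * (v - 1)) 1 @ [2]) = alt (\<not>s) (v-1) @ [\<not>s,\<not>s]"
    by (simp only: sp_rep1) (simp add: sp_cons numeral_2_eq_2)
  then show ?thesis unfolding cfb_def spb_def
    by (simp only: append.simps sp_cons) (simp add: numeral_2_eq_2)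
qed

lemma cfb_len: "even (length (cfb v))" by (simp add: cfb_def)

lemma sp_concat_cfb: "sign_pattern s (concat (map cfb vs)) = concat (map (spb s) vs)"
  by (induction vs) (auto simp: sp_append cfb_len sp_cfb)

lemma run_alt: "run True s (alt (\<not>s) k @ ys) = replicate (2*k) True @ run True s ys"
  by (induction k) (auto simp: alt_def)

definition gb :: "nat \<Rightarrow> bool list" where
  "gb v = False # replicate (2*v) True @ [False]"

lemma run_spb: "0 < v \<Longrightarrow> run False (\<not>s) (spb s v @ ys) = gb v @ run False (\<not>s) ys"
proof -
  assume "0 < v"
  then obtain k where k: "v = Suc k" by (cases v) auto
  have "run False (\<not>s) (spb s v @ ys) = [False, True] @ run True s (alt (\<not>s) k @ [\<not>s,\<not>s] @ ys)"
    by (simp add: spb_def k)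
  also have "\<dots> = [False, True] @ replicate (2*k) True @ [True, False] @ run False (\<not>s) ys"
    by (simp add: run_alt)
  also have "\<dots> = gb v @ run False (\<not>s) ys"
    by (simp add: gb_def k replicate_append_same[symmetric] del: replicate_append_same)
  finally show ?thesis .
qed

lemma run_concat_spb: "\<forall>v\<in>set vs. 0 < v \<Longrightarrow> run False (\<not>s) (concat (map (spb s) vs)) = concat (map gb vs)"
  by (induction vs) (auto simp: run_spb)

definition blk :: "nat \<Rightarrow> bool list" where
  "blk v = replicate (2*v) True @ [False, False]"

definition DD :: "nat list \<Rightarrow> bool list" where
  "DD vs = concat (map blk vs)"

lemma gb_DD: "concat (map gb vs) @ [False] = False # DD vs"
  by (induction vs) (auto simp: gb_def DD_def blk_def)



lemma concat_nth_off:
  "i < length xss \<Longrightarrow> j < length (xss!i) \<Longrightarrow>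
   concat xss ! (sum_list (map length (take i xss)) + j) = xss!i!j"
proof (induction xss arbitrary: i)
  case Nil then show ?case by simp
next
  case (Cons xs xss)
  show ?case
  proof (cases i)
    case 0 then show ?thesis using Cons by (simp add: nth_append)
  next
    case (Suc k) then show ?thesis using Cons by (simp add: nth_append add.assoc)
  qed
qed

lemma concat_cover:
  "m < length (concat xss) \<Longrightarrow>
   \<exists>i j. i < length xss \<and> j < length (xss!i) \<and> m = sum_list (map length (take i xss)) + j"
proof (induction xss arbitrary: m)
  case Nil then show ?case by simp
next
  case (Cons xs xss)
  show ?case
  proof (cases "m < length xs")
    case True then show ?thesis by (rule_tac x=0 in exI) auto
  next
    case False
    then have "m - length xs < length (concat xss)" using Cons.prems by simp
    from Cons.IH[OF this] obtain i j where "i < length xss" "j < length (xss!i)"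
      "m - length xs = sum_list (map length (take i xss)) + j" by blast
    then show ?thesis using False by (rule_tac x="Suc i" in exI) auto
  qed
qed



locale mk =
  fixes p q :: nat
  assumes p0: "0 < p" and pq: "p < q" and cop: "coprime p q"
begin

definition g :: "nat \<Rightarrow> nat" where
  "g i = (if i < p then i * q div p else q - 1)"

lemma g0[simp]: "g 0 = 0" using p0 by (simp add: g_def)

lemma gp[simp]: "g p = q - 1" by (simp add: g_def)

lemma g_step: "i < p \<Longrightarrow> g i < g (Suc i)"
proof -
  assume i: "i < p"
  show ?thesis
  proof (cases "Suc i < p")
    case True
    have "(i*q + p) div p \<le> (i*q + q) div p" using pq by (intro div_le_mono) simp
    moreover have "(i*q + p) div p = i*q div p + 1" using p0 div_add_self2[of p "i*q"] by simp
    ultimately have "i*q div p + 1 \<le> Suc i * q div p" by (simp add: add.commute)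
    then show ?thesis using True i by (simp add: g_def)
  next
    case False
    then have ip: "p = Suc i" using i by simp
    have "i * q div p < q - 1"
    proof -
      have e1: "i * q = i * (q - 1) + i" using pq by (cases q) auto
      have e2: "p * (q - 1) = (q - 1) + i * (q - 1)" using ip by simp
      have "i * q < p * (q - 1)" using e1 e2 ip pq by linarith
      then show ?thesis using p0 by (simp add: div_less_iff_less_mult mult.commute)
    qed
    then show ?thesis using False i by (simp add: g_def)
  qed
qed

lemma g_strict: "i < j \<Longrightarrow> j \<le> p \<Longrightarrow> g i < g j"
proof (induction j)
  case 0 then show ?case by simp
next
  case (Suc j)
  show ?case
  proof (cases "i < j")
    case True then show ?thesis using Suc g_step[of j] by simp
  next
    case False then have "i = j" using Suc by simp
    then show ?thesis using Suc g_step[of j] by simp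
  qed
qed

lemma g_mono: "i \<le> j \<Longrightarrow> j \<le> p \<Longrightarrow> g i \<le> g j"
  using g_strict by (cases "i = j") (auto intro: less_imp_le)

lemma v_eq: "1 \<le> i \<Longrightarrow> i \<le> p \<Longrightarrow> markov_v p q i = g i - g (i-1)"
  by (auto simp: markov_v_def g_def)

lemma g_sym: "i \<le> p \<Longrightarrow> g i + g (p - i) = q - 1"
proof -
  assume ip: "i \<le> p"
  show ?thesis
  proof (cases "i = 0 \<or> i = p")
    case True then show ?thesis using p0 by auto
  next
    case False
    then have i: "0 < i" "i < p" using ip by auto
    have nd: "\<not> p dvd i * q"
    proof
      assume "p dvd i * q"
      then have "p dvd i" using cop by (simp add: coprime_dvd_mult_left_iff)
      then show False using i by (auto dest: dvd_imp_le)
    qed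
    define a where "a = i * q"
    define r where "r = a mod p"
    have r: "0 < r" "r < p" using nd p0 by (auto simp: r_def a_def mod_greater_zero_iff_not_dvd)
    have adecomp: "a = p * (a div p) + r" by (simp add: r_def)
    have aq: "a div p < q"
      using i pq by (simp add: a_def div_less_iff_less_mult)
    define t where "t = a div p"
    obtain u where u: "q = u + t + 1" using aq unfolding t_def
      by (metis add.commute less_imp_Suc_add plus_1_eq_Suc add.left_commute)
    have pq': "p * q = p * u + p * t + p" using u by (simp add: algebra_simps)
    have "(p - i) * q = p * q - a" by (simp add: a_def diff_mult_distrib)
    also have "\<dots> = p * u + (p - r)" using pq' adecomp r unfolding t_def by linarith
    finally have "(p - i) * q div p = u"
      by (intro div_nat_eqI) (use r in auto)
    moreover have "u = q - a div p - 1" using u t_def by simp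
    ultimately have "(p - i) * q div p = q - a div p - 1" by simp
    then show ?thesis using i aq by (simp add: g_def a_def)
  qed
qed

end


context mk begin

lemma v_sym: "1 \<le> i \<Longrightarrow> i \<le> p \<Longrightarrow> markov_v p q (p + 1 - i) = markov_v p q i"
proof -
  assume i: "1 \<le> i" "i \<le> p"
  have s1: "g (i-1) + g (p + 1 - i) = q - 1" using g_sym[of "i-1"] i by (simp add: Suc_diff_le)
  have s2: "g i + g (p - i) = q - 1" using g_sym[of i] i by simp
  have m: "g (i-1) \<le> g i" using g_mono[of "i-1" i] i by simp
  have "markov_v p q (p + 1 - i) = g (p + 1 - i) - g (p - i)"
    using v_eq[of "p+1-i"] i by (simp add: Suc_diff_le)
  also have "\<dots> = g i - g (i - 1)" using s1 s2 m by linarith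
  finally show ?thesis using v_eq[of i] i by simp
qed

lemma v_pos: "1 \<le> i \<Longrightarrow> i \<le> p \<Longrightarrow> 0 < markov_v p q i"
  using v_eq g_strict[of "i-1" i] by simp

lemma v_range: "2 \<le> p \<Longrightarrow> 1 \<le> i \<Longrightarrow> i \<le> p \<Longrightarrow>
  markov_v p q i = q div p \<or> markov_v p q i = q div p + 1"
proof -
  assume p2: "2 \<le> p" and i: "1 \<le> i" "i \<le> p"
  have gen: "markov_v p q j = q div p \<or> markov_v p q j = q div p + 1" if j: "1 \<le> j" "j < p" for j
  proof -
    define a where "a = (j - 1) * q"
    obtain j' where j': "j = Suc j'" using j by (cases j) auto
    have jq: "j * q = a + q" by (simp add: a_def j')
    have e: "(a + q) div p = a div p + q div p + (a mod p + q mod p) div p" by (rule div_add1_eq)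
    have "a mod p < p" "q mod p < p" using p0 by auto
    then have "a mod p + q mod p < 2 * p" by linarith
    then have "(a mod p + q mod p) div p < 2" by (simp add: div_less_iff_less_mult mult.commute p0)
    then have "(a mod p + q mod p) div p = 0 \<or> (a mod p + q mod p) div p = 1" by linarith
    moreover have "markov_v p q j = (a + q) div p - a div p"
      using j jq by (simp add: markov_v_def a_def)
    ultimately show ?thesis using e by auto
  qed
  show ?thesis
  proof (cases "i < p")
    case True then show ?thesis using gen i by simp
  next
    case False
    then have "i = p" using i by simp
    then have "markov_v p q i = markov_v p q 1" using v_sym[of 1] p2 by simp
    then show ?thesis using gen[of 1] p2 by simp
  qed
qed

definition vs :: "nat list" where "vs = map (markov_v p q) [1..<Suc p]"

lemma vs_len[simp]: "length vs = p" by (simp add: vs_def)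

lemma vs_nth: "k < p \<Longrightarrow> vs ! k = g (Suc k) - g k"
  by (simp add: vs_def v_eq del: upt_Suc)

lemma vs_pos: "\<forall>v\<in>set vs. 0 < v"
  by (auto simp: vs_def v_pos)

lemma vs_rev: "rev vs = vs"
proof (rule nth_equalityI)
  show "length (rev vs) = length vs" by simp
next
  fix i assume "i < length (rev vs)"
  then have i: "i < p" by simp
  have "rev vs ! i = vs ! (p - 1 - i)" using i by (simp add: rev_nth)
  also have "\<dots> = markov_v p q (p - i)" using i by (simp add: vs_def Suc_diff_Suc del: upt_Suc)
  also have "\<dots> = markov_v p q (Suc i)" using v_sym[of "Suc i"] i by (simp add: Suc_diff_Suc)
  also have "\<dots> = vs ! i" using i by (simp add: vs_def del: upt_Suc)
  finally show "rev vs ! i = vs ! i" .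
qed

definition aa :: "nat \<Rightarrow> nat" where "aa k = 2 * k + 2 * g k"
definition bb :: "nat \<Rightarrow> nat" where "bb k = 2 * k + 2 * g (Suc k)"

lemma aa_Suc: "k < p \<Longrightarrow> aa (Suc k) = bb k + 2" by (simp add: aa_def bb_def)
lemma aa_lt_bb: "k < p \<Longrightarrow> aa k < bb k" using g_step[of k] by (simp add: aa_def bb_def)
lemma aa_mono: "k \<le> k' \<Longrightarrow> k' \<le> p \<Longrightarrow> aa k \<le> aa k'"
  using g_mono[of k k'] by (simp add: aa_def)
lemma bb_mono: "k \<le> k' \<Longrightarrow> k' < p \<Longrightarrow> bb k \<le> bb k'"
  using g_mono[of "Suc k" "Suc k'"] by (simp add: bb_def)

definition inT :: "nat \<Rightarrow> bool" where "inT j = (\<exists>k<p. aa k \<le> j \<and> j < bb k)"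

lemma inT_iff: "k < p \<Longrightarrow> aa k \<le> j \<Longrightarrow> j < aa (Suc k) \<Longrightarrow> inT j \<longleftrightarrow> j < bb k"
proof
  assume k: "k < p" "aa k \<le> j" "j < aa (Suc k)" and "inT j"
  then obtain k' where k': "k' < p" "aa k' \<le> j" "j < bb k'" by (auto simp: inT_def)
  have "\<not> k' < k"
  proof
    assume "k' < k"
    then have "aa (Suc k') \<le> aa k" using aa_mono k by simp
    then show False using aa_Suc[of k'] k k' by simp
  qed
  moreover have "\<not> k < k'"
  proof
    assume "k < k'"
    then have "aa (Suc k) \<le> aa k'" using aa_mono k' by simp
    then show False using k k' by simp
  qed
  ultimately show "j < bb k" using k' by simp
next
  assume "k < p" "aa k \<le> j" "j < aa (Suc k)" "j < bb k"
  then show "inT j" by (auto simp: inT_def)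
qed

lemma blk_len: "length (blk v) = 2 * v + 2" by (simp add: blk_def)

lemma off_eq: "k \<le> p \<Longrightarrow> sum_list (map length (take k (map blk vs))) = aa k"
proof (induction k)
  case 0 then show ?case by (simp add: aa_def)
next
  case (Suc k)
  then have k: "k < p" by simp
  have "take (Suc k) (map blk vs) = take k (map blk vs) @ [blk (vs!k)]"
    using k by (simp add: take_Suc_conv_app_nth)
  then have "sum_list (map length (take (Suc k) (map blk vs))) = aa k + 2 * vs ! k + 2"
    using Suc k by (simp add: blk_len)
  also have "\<dots> = aa (Suc k)" using vs_nth[OF k] g_step[OF k] by (simp add: aa_def)
  finally show ?case .
qed

lemma DD_len: "length (DD vs) = aa p"
  using off_eq[of p] by (simp add: DD_def length_concat)

lemma DD_nth: "j < aa p \<Longrightarrow> DD vs ! j = inT j"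
proof -
  assume j: "j < aa p"
  then have "j < length (concat (map blk vs))" using DD_len by (simp add: DD_def)
  from concat_cover[OF this] obtain k r where kr: "k < p" "r < length (blk (vs!k))"
    "j = sum_list (map length (take k (map blk vs))) + r" by auto
  have jr: "j = aa k + r" using kr off_eq[of k] by simp
  have "DD vs ! j = blk (vs!k) ! r" using concat_nth_off[of k "map blk vs" r] kr by (simp add: DD_def)
  also have "\<dots> = (r < 2 * (vs!k))" using kr(2) by (auto simp: blk_def nth_append nth_Cons')
  also have "\<dots> = (j < bb k)" using jr vs_nth[OF kr(1)] g_step[OF kr(1)] by (simp add: aa_def bb_def; arith)
  also have "\<dots> = inT j"
  proof (rule inT_iff[symmetric])
    show "k < p" by fact
    show "aa k \<le> j" using jr by simp
    show "j < aa (Suc k)" using jr kr(2) vs_nth[OF kr(1)] g_step[OF kr(1)] by (simp add: aa_def blk_len)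
  qed
  finally show ?thesis .
qed

end


definition stepf :: "bool \<Rightarrow> point \<Rightarrow> point" where
  "stepf b t = (if b then east_of t else north_of t)"

lemma eo_ne_no[simp]: "east_of t \<noteq> north_of t" "north_of t \<noteq> east_of t"
  by (auto simp: east_of_def north_of_def prod_eq_iff)

lemma east_ne_north[simp]: "east t \<noteq> north t" "north t \<noteq> east t"
  by (auto simp: east_def north_def prod_eq_iff)

lemma east_west: "east t = west (east_of t)" by (simp add: east_def west_def east_of_def)
lemma north_south: "north t = south (north_of t)" by (simp add: north_def south_def north_of_def)

lemma es_len: "ts \<noteq> [] \<Longrightarrow> length (edge_seq ts ed) = Suc (length ts)"
  by (simp add: edge_seq_def)

lemma es0: "ts \<noteq> [] \<Longrightarrow> edge_seq ts ed ! 0 = south (ts!0)"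
  by (simp add: edge_seq_def hd_conv_nth)

lemma esSuc: "i < length ts \<Longrightarrow> edge_seq ts ed ! Suc i =
   (if Suc i < length ts then shared_edge (ts!i) (ts!Suc i) else ed)"
  by (auto simp: edge_seq_def nth_append)

definition cd :: "point list \<Rightarrow> edge \<Rightarrow> nat \<Rightarrow> bool" where
  "cd ts ed i = (if Suc i < length ts then ts!Suc i = east_of (ts!i) else ed = east (ts!i))"

lemma snake_step: "snake ts \<Longrightarrow> Suc i < length ts \<Longrightarrow> ts!Suc i = stepf (cd ts ed i) (ts!i)"
  by (auto simp: snake_def cd_def stepf_def)

lemma es_A: assumes "snake ts" "ed \<in> {north (last ts), east (last ts)}" "i < length ts"
  shows "edge_seq ts ed ! Suc i = (if cd ts ed i then east (ts!i) else north (ts!i))"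
proof (cases "Suc i < length ts")
  case True
  then have "ts!Suc i = north_of (ts!i) \<or> ts!Suc i = east_of (ts!i)" using assms(1) by (auto simp: snake_def)
  then show ?thesis using True assms(3) by (auto simp: esSuc cd_def shared_edge_def)
next
  case False
  then have "i = length ts - 1" using assms(3) by simp
  then have "last ts = ts!i" using assms(1,3) by (simp add: last_conv_nth snake_def)
  then show ?thesis using False assms by (auto simp: esSuc cd_def)
qed

lemma es_C: assumes "snake ts" "ed \<in> {north (last ts), east (last ts)}" "i < length ts"
  shows "edge_seq ts ed ! i = (if 0 < i \<and> cd ts ed (i-1) then west (ts!i) else south (ts!i))"
proof (cases i)
  case 0 then show ?thesis using assms(1) by (simp add: es0 snake_def)
next
  case (Suc j)
  then have "edge_seq ts ed ! i = (if cd ts ed j then east (ts!j) else north (ts!j))"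
    using es_A[OF assms(1,2), of j] assms(3) by simp
  moreover have "ts!i = stepf (cd ts ed j) (ts!j)" using snake_step[OF assms(1)] Suc assms(3) by simp
  ultimately show ?thesis using Suc by (simp add: stepf_def east_west north_south)
qed

lemma sign_step: assumes "snake ts" "sign_function ts f" "ed \<in> {north (last ts), east (last ts)}" "i < length ts"
  shows "f (edge_seq ts ed ! Suc i) = f (edge_seq ts ed ! i) \<longleftrightarrow> (cd ts ed i \<noteq> (0 < i \<and> cd ts ed (i-1)))"
proof -
  have t: "ts!i \<in> set ts" using assms(4) by simp
  then have sf: "f (north (ts!i)) = f (west (ts!i))" "f (south (ts!i)) = f (east (ts!i))"
      "f (north (ts!i)) \<noteq> f (south (ts!i))" using assms(2) by (auto simp: sign_function_def)
  show ?thesis using es_A[OF assms(1,3,4)] es_C[OF assms(1,3,4)] sf by auto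
qed

lemma cd_unique:
  assumes "snake ts" "sign_function ts f" "ed \<in> {north (last ts), east (last ts)}"
    and "map f (edge_seq ts ed) = P"
    and rec: "\<And>i. i < length ts \<Longrightarrow> c!i = ((0 < i \<and> c!(i-1)) \<noteq> (P!i = P!Suc i))"
  shows "i < length ts \<Longrightarrow> cd ts ed i = c!i"
proof (induction i)
  case 0
  have ne: "ts \<noteq> []" using assms(1) by (simp add: snake_def)
  have "P!0 = f (edge_seq ts ed ! 0)" "P!Suc 0 = f (edge_seq ts ed ! Suc 0)"
    using assms(4) 0 es_len[OF ne, of ed] by auto
  then show ?case using sign_step[OF assms(1-3) 0] rec[OF 0] by auto
next
  case (Suc i)
  have ne: "ts \<noteq> []" using assms(1) by (simp add: snake_def)
  have "P!Suc i = f (edge_seq ts ed ! Suc i)" "P!Suc (Suc i) = f (edge_seq ts ed ! Suc (Suc i))"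
    using assms(4) Suc.prems es_len[OF ne, of ed] by auto
  then show ?case using sign_step[OF assms(1-3) Suc.prems] rec[OF Suc.prems] Suc by auto
qed

definition wpos :: "bool list \<Rightarrow> nat \<Rightarrow> point" where
  "wpos c i = (int (length (filter id (take i c))), int (length (filter Not (take i c))))"

lemma wpos_Suc: "i < length c \<Longrightarrow> wpos c (Suc i) = stepf (c!i) (wpos c i)"
  by (simp add: wpos_def take_Suc_conv_app_nth stepf_def east_of_def north_of_def)

definition f0 :: "edge \<Rightarrow> bool" where
  "f0 e = (even (fst (fst e) + snd (fst e)) = (fst (fst e) \<noteq> fst (snd e)))"

lemma f0_sign: "sign_function ts f0"
  by (auto simp: sign_function_def f0_def north_def south_def east_def west_def)

lemma exist_walk:
  assumes n: "0 < length c" and lastc: "c ! (length c - 1) = False"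
    and lenP: "length P = Suc (length c)"
    and P0: "P!0 = f0 (south (0,0))"
    and rec: "\<And>i. i < length c \<Longrightarrow> (P!i = P!Suc i) \<longleftrightarrow> (c!i \<noteq> (0 < i \<and> c!(i-1)))"
  shows "\<exists>ts f ed. snake ts \<and> length ts = length c \<and> sign_function ts f \<and>
     ed \<in> {north (last ts), east (last ts)} \<and> map f (edge_seq ts ed) = P"
proof -
  define ts where "ts = map (wpos c) [0..<length c]"
  define ed where "ed = north (last ts)"
  have len: "length ts = length c" by (simp add: ts_def)
  have ne: "ts \<noteq> []" using n by (simp add: ts_def)
  have sn: "snake ts" using ne
    by (auto simp: snake_def ts_def wpos_Suc stepf_def)
  have edin: "ed \<in> {north (last ts), east (last ts)}" by (simp add: ed_def)
  have cdc: "cd ts ed i = c!i" if "i < length c" for i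
  proof (cases "Suc i < length c")
    case True then show ?thesis by (auto simp: cd_def ts_def wpos_Suc stepf_def)
  next
    case False
    then have "i = length c - 1" using that by simp
    then show ?thesis using False lastc len by (simp add: cd_def ed_def last_conv_nth ne)
  qed
  have fe: "f0 (edge_seq ts ed ! i) = P ! i" if "i \<le> length c" for i
    using that
  proof (induction i)
    case 0 then show ?case using P0 ne by (simp add: es0 ts_def wpos_def)
  next
    case (Suc i)
    then have i: "i < length c" by simp
    have "f0 (edge_seq ts ed ! Suc i) = f0 (edge_seq ts ed ! i) \<longleftrightarrow> (c!i \<noteq> (0 < i \<and> c!(i-1)))"
      using sign_step[OF sn f0_sign edin, of i] i len cdc[OF i] cdc[of "i-1"] by auto
    then show ?case using rec[OF i] Suc by auto
  qed
  have "map f0 (edge_seq ts ed) = P"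
    by (rule nth_equalityI) (auto simp: es_len[OF ne] lenP len fe)
  then show ?thesis using sn len f0_sign edin by blast
qed



lemma step_east_iff: "stepf b t = east_of t \<longleftrightarrow> b" by (simp add: stepf_def)
lemma step_north_iff: "stepf b t = north_of t \<longleftrightarrow> \<not> b" by (simp add: stepf_def)

locale walk =
  fixes ts :: "point list" and c :: "bool list"
  assumes len: "length ts = length c" and pos: "0 < length c"
    and cl: "c ! (length c - 1) = False"
    and stp: "\<And>i. Suc i < length ts \<Longrightarrow> ts!Suc i = stepf (c!i) (ts!i)"
begin

lemma e_iff: "Suc l < length c \<Longrightarrow> ts ! Suc l = east_of (ts ! l) \<longleftrightarrow> c!l"
  using stp[of l] len by (simp add: step_east_iff)
lemma n_iff: "Suc l < length c \<Longrightarrow> ts ! Suc l = north_of (ts ! l) \<longleftrightarrow> \<not> c!l"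
  using stp[of l] len by (simp add: step_north_iff)

lemma hseg_char: "(j,k) \<in> hsegments ts \<longleftrightarrow> (j<k \<and> k < length c \<and> (\<forall>l. j \<le> l \<and> l<k \<longrightarrow> c!l) \<and> (j = 0 \<or> \<not> c!(j-1)) \<and> \<not> c!k)"
proof (cases "j < k \<and> k < length c")
  case True
  have a: "(\<forall>l. j \<le> l \<and> l<k \<longrightarrow> ts ! Suc l = east_of (ts ! l)) \<longleftrightarrow> (\<forall>l. j \<le> l \<and> l<k \<longrightarrow> c!l)"
    using True e_iff by auto
  have b: "(j = 0 \<or> ts ! j \<noteq> east_of (ts ! (j-1))) \<longleftrightarrow> (j = 0 \<or> \<not> c!(j-1))"
    using True e_iff[of "j-1"] by (cases j) auto
  have c: "(Suc k = length ts \<or> ts ! Suc k \<noteq> east_of (ts ! k)) \<longleftrightarrow> \<not> c!k"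
  proof (cases "Suc k = length c")
    case True2: True
    then have "k = length c - 1" by simp
    then show ?thesis using cl True2 len by simp
  next
    case False
    then show ?thesis using e_iff[of k] True len by simp
  qed
  show ?thesis unfolding hsegments_def segments_def using True a b c len by auto
next
  case False then show ?thesis unfolding hsegments_def segments_def using len by auto
qed

lemma vseg_char: "(j,k) \<in> vsegments ts \<longleftrightarrow> (j<k \<and> k < length c \<and> (\<forall>l. j \<le> l \<and> l<k \<longrightarrow> \<not> c!l) \<and> (j = 0 \<or> c!(j-1)) \<and> (Suc k = length c \<or> c!k))"
proof (cases "j < k \<and> k < length c")
  case True
  have a: "(\<forall>l. j \<le> l \<and> l<k \<longrightarrow> ts ! Suc l = north_of (ts ! l)) \<longleftrightarrow> (\<forall>l. j \<le> l \<and> l<k \<longrightarrow> \<not> c!l)"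
    using True n_iff by auto
  have b: "(j = 0 \<or> ts ! j \<noteq> north_of (ts ! (j-1))) \<longleftrightarrow> (j = 0 \<or> c!(j-1))"
    using True n_iff[of "j-1"] by (cases j) auto
  have c: "(Suc k = length ts \<or> ts ! Suc k \<noteq> north_of (ts ! k)) \<longleftrightarrow> (Suc k = length c \<or> c!k)"
    using n_iff[of k] True len by (cases "Suc k = length c") auto
  show ?thesis unfolding vsegments_def segments_def using True a b c len by auto
next
  case False then show ?thesis unfolding vsegments_def segments_def using len by auto
qed

definition refl :: "point \<Rightarrow> point \<Rightarrow> point" where
  "refl z t = (2 * fst z - fst t, 2 * snd z - snd t)"

lemma rot_tile: "rot180_edge z ` tile_edges t = tile_edges (refl z t)"
  by (auto simp: tile_edges_def rot180_edge_def rot180_def refl_def north_def south_def east_def west_def)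

lemma sym:
  assumes pal: "\<And>i. Suc i < length c \<Longrightarrow> c ! (length c - 2 - i) = c ! i"
    and odd: "length c = 2 * m + 1"
  shows "rotationally_symmetric_at_tile ts"
proof -
  let ?n = "length c"
  have sumeq: "fst (ts!i) + fst (ts!(?n-1-i)) = fst (ts!0) + fst (ts!(?n-1)) \<and>
               snd (ts!i) + snd (ts!(?n-1-i)) = snd (ts!0) + snd (ts!(?n-1))" if "i < ?n" for i
    using that
  proof (induction i)
    case 0 then show ?case by simp
  next
    case (Suc i)
    have a: "ts!Suc i = stepf (c!i) (ts!i)" using stp Suc.prems len by simp
    have b: "ts!(?n-1-i) = stepf (c!(?n-2-i)) (ts!(?n-1-Suc i))"
      using stp[of "?n-1-Suc i"] Suc.prems len by (simp add: Suc_diff_Suc numeral_2_eq_2)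
    have cc: "c!(?n-2-i) = c!i" using pal Suc.prems by simp
    show ?case using Suc a b cc by (auto simp: stepf_def east_of_def north_of_def)
  qed
  have mm: "?n - 1 - m = m" using odd by simp
  have m: "m < ?n" using odd by simp
  define z where "z = ts!m"
  have rf: "refl z (ts!i) = ts!(?n-1-i)" if "i < ?n" for i
    using sumeq[OF that] sumeq[OF m] mm unfolding z_def refl_def by (simp add: prod_eq_iff)
  have "refl z ` set ts = set ts"
  proof
    show "refl z ` set ts \<subseteq> set ts"
    proof
      fix t assume "t \<in> refl z ` set ts"
      then obtain i where i: "i < ?n" "t = refl z (ts!i)" using len by (auto simp: in_set_conv_nth)
      then show "t \<in> set ts" using rf[of i] len by auto
    qed
    show "set ts \<subseteq> refl z ` set ts"
    proof
      fix t assume "t \<in> set ts"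
      then obtain i where i: "i < ?n" "t = ts!i" using len by (auto simp: in_set_conv_nth)
      then have "t = refl z (ts!(?n-1-i))" using rf[of "?n-1-i"] pos by simp
      moreover have "ts!(?n-1-i) \<in> set ts" using i pos len by simp
      ultimately show "t \<in> refl z ` set ts" by blast
    qed
  qed
  then have "rot180_edge z ` snake_edges ts = snake_edges ts"
    unfolding snake_edges_def by (simp add: image_UN rot_tile) (metis UN_simps(10))
  then show ?thesis unfolding rotationally_symmetric_at_tile_def z_def using m len by auto
qed

end


context mk begin

definition cc :: "bool list" where "cc = butlast (DD vs)"

lemma aa0[simp]: "aa 0 = 0" by (simp add: aa_def)

lemma aap: "aa p = bb (p-1) + 2" using aa_Suc[of "p-1"] p0 by simp

lemma cc_len: "length cc = aa p - 1" by (simp add: cc_def DD_len)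

lemma cc_nth: "j < aa p - 1 \<Longrightarrow> cc ! j = inT j"
  by (simp add: cc_def nth_butlast DD_len DD_nth)

lemma notT_bb: "k < p \<Longrightarrow> \<not> inT (bb k)" "k < p \<Longrightarrow> \<not> inT (Suc (bb k))"
  using inT_iff[of k "bb k"] inT_iff[of k "Suc (bb k)"] aa_lt_bb[of k] aa_Suc[of k] by auto

lemma inT_in: "k < p \<Longrightarrow> aa k \<le> j \<Longrightarrow> j < bb k \<Longrightarrow> inT j"
  by (auto simp: inT_def)

lemma locate: "j < aa p \<Longrightarrow> \<exists>k<p. aa k \<le> j \<and> j < aa (Suc k)"
proof -
  have "\<forall>m\<le>p. j < aa m \<longrightarrow> (\<exists>k<m. aa k \<le> j \<and> j < aa (Suc k))" for j
  proof (intro allI impI)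
    fix m assume "m \<le> p" "j < aa m"
    then show "\<exists>k<m. aa k \<le> j \<and> j < aa (Suc k)"
    proof (induction m)
      case 0 then show ?case by simp
    next
      case (Suc m)
      show ?case
      proof (cases "j < aa m")
        case True
        then obtain k where "k < m" "aa k \<le> j \<and> j < aa (Suc k)" using Suc by auto
        then show ?thesis by (intro exI[of _ k]) auto
      next
        case False then show ?thesis using Suc.prems by (intro exI[of _ m]) auto
      qed
    qed
  qed
  then show "j < aa p \<Longrightarrow> \<exists>k<p. aa k \<le> j \<and> j < aa (Suc k)" by blast
qed

lemma bb_lt: "k < p \<Longrightarrow> bb k < aa p - 1"
proof -
  assume k: "k < p"
  then have "bb k \<le> bb (p-1)" using bb_mono[of k "p-1"] by simp
  then show ?thesis using aap by simp
qed

lemma cc_last: "cc ! (length cc - 1) = False"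
  using cc_nth[of "aa p - 2"] notT_bb(1)[of "p-1"] aap p0 cc_len by simp

lemma hseg_eq: assumes w: "walk ts cc" shows "hsegments ts = (\<lambda>k. (aa k, bb k)) ` {..<p}"
proof (intro set_eqI iffI)
  fix x assume x: "x \<in> hsegments ts"
  obtain j k where jk: "x = (j,k)" by (cases x)
  have h: "j<k" "k < aa p - 1" "\<And>l. j \<le> l \<Longrightarrow> l<k \<Longrightarrow> inT l" "j = 0 \<or> \<not> inT (j-1)" "\<not> inT k"
    using x[unfolded jk walk.hseg_char[OF w]] cc_len cc_nth by auto
  have "inT j" using h by simp
  have "j < aa p" using h(1,2) by simp
  from locate[OF this] obtain K where K: "K < p" "aa K \<le> j" "j < aa (Suc K)" by auto
  have jb: "j < bb K" using inT_iff[OF K] \<open>inT j\<close> by simp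
  have ja: "j = aa K"
  proof (rule ccontr)
    assume "j \<noteq> aa K"
    then have "inT (j-1)" using K jb by (intro inT_in[of K]) auto
    moreover have "j \<noteq> 0" using \<open>j \<noteq> aa K\<close> K by auto
    ultimately show False using h by auto
  qed
  have kb: "k = bb K"
  proof (rule ccontr)
    assume "k \<noteq> bb K"
    then consider "k < bb K" | "bb K < k" by linarith
    then show False
    proof cases
      case 1 then show False using inT_in[of K k] K h by auto
    next
      case 2 then show False using h(3)[of "bb K"] notT_bb(1)[OF K(1)] jb by auto
    qed
  qed
  show "x \<in> (\<lambda>k. (aa k, bb k)) ` {..<p}" using jk ja kb K by auto
next
  fix x assume "x \<in> (\<lambda>k. (aa k, bb k)) ` {..<p}"
  then obtain K where K: "K < p" "x = (aa K, bb K)" by auto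
  have j: "aa K = 0 \<or> \<not> cc ! (aa K - 1)"
  proof (cases K)
    case 0 then show ?thesis by simp
  next
    case (Suc K')
    then have "aa K - 1 = Suc (bb K')" using aa_Suc[of K'] K by simp
    moreover have "Suc (bb K') < aa p - 1" using bb_lt[of K] K Suc aa_Suc[of K'] aa_lt_bb[of K] by simp
    ultimately show ?thesis using cc_nth notT_bb(2)[of K'] K Suc by simp
  qed
  show "x \<in> hsegments ts"
    unfolding K(2) walk.hseg_char[OF w] cc_len
    using K aa_lt_bb[OF K(1)] bb_lt[OF K(1)] j cc_nth inT_in[OF K(1)] notT_bb(1)[OF K(1)] by auto
qed

lemma vseg_eq: assumes w: "walk ts cc" shows "vsegments ts = (\<lambda>k. (bb k, aa (Suc k))) ` {..<p-1}"
proof (intro set_eqI iffI)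
  fix x assume x: "x \<in> vsegments ts"
  obtain j k where jk: "x = (j,k)" by (cases x)
  have h: "j<k" "k < aa p - 1" "\<And>l. j \<le> l \<Longrightarrow> l<k \<Longrightarrow> \<not> inT l" "j = 0 \<or> inT (j-1)" "Suc k = aa p - 1 \<or> inT k"
    using x[unfolded jk walk.vseg_char[OF w]] cc_len cc_nth by auto
  have "\<not> inT j" using h by simp
  have "inT 0" using inT_in[of 0 0] aa_lt_bb[of 0] p0 by simp
  then have j0: "j \<noteq> 0" using \<open>\<not> inT j\<close> by (cases j) auto
  then have "inT (j-1)" using h by simp
  then obtain K where K: "K < p" "aa K \<le> j - 1" "j - 1 < bb K" by (auto simp: inT_def)
  have jb: "j = bb K"
  proof (rule ccontr)
    assume "j \<noteq> bb K"
    then have "inT j" using K j0 by (intro inT_in[of K]) auto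
    then show False using \<open>\<not> inT j\<close> by simp
  qed
  have Kp: "K < p - 1"
  proof (rule ccontr)
    assume "\<not> K < p - 1"
    then have "K = p - 1" using K by simp
    then have "j = aa p - 2" using jb aap by simp
    then show False using h by simp
  qed
  have SK: "Suc K < p" using Kp by simp
  have aS: "aa (Suc K) < aa p - 1" using aa_lt_bb[of "Suc K"] bb_lt[of "Suc K"] SK by simp
  have iS: "inT (aa (Suc K))" using inT_in[of "Suc K"] aa_lt_bb[of "Suc K"] SK by simp
  have kb: "k = aa (Suc K)"
  proof (rule ccontr)
    assume "k \<noteq> aa (Suc K)"
    then consider "k = Suc (bb K)" | "aa (Suc K) < k" using h(1) jb aa_Suc[of K] K by linarith
    then show False
    proof cases
      case 1 then show False using h(5) notT_bb(2)[OF K(1)] aa_Suc[of K] K aS by auto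
    next
      case 2 then show False using h(3)[of "aa (Suc K)"] iS jb aa_Suc[of K] K by auto
    qed
  qed
  show "x \<in> (\<lambda>k. (bb k, aa (Suc k))) ` {..<p-1}" using jk jb kb Kp by auto
next
  fix x assume "x \<in> (\<lambda>k. (bb k, aa (Suc k))) ` {..<p-1}"
  then obtain K where K: "K < p - 1" "x = (bb K, aa (Suc K))" by auto
  have Kp: "K < p" using K by simp
  have SK: "Suc K < p" using K by simp
  have aS: "aa (Suc K) < aa p - 1" using aa_lt_bb[of "Suc K"] bb_lt[of "Suc K"] SK by simp
  have iS: "inT (aa (Suc K))" using inT_in[of "Suc K"] aa_lt_bb[of "Suc K"] SK by simp
  have as: "aa (Suc K) = Suc (Suc (bb K))" using aa_Suc[OF Kp] by simp
  have nl: "\<not> cc ! l" if "bb K \<le> l" "l < aa (Suc K)" for l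
  proof -
    have "l = bb K \<or> l = Suc (bb K)" using that as by linarith
    then show ?thesis using cc_nth notT_bb[OF Kp] aS as by auto
  qed
  have bp: "0 < bb K" using aa_lt_bb[OF Kp] by simp
  have pr: "inT (bb K - 1)" using inT_in[OF Kp, of "bb K - 1"] aa_lt_bb[OF Kp] by simp
  show "x \<in> vsegments ts"
    unfolding K(2) walk.vseg_char[OF w] cc_len
    using as aS nl bp pr iS cc_nth[of "bb K - 1"] cc_nth[of "aa (Suc K)"] by auto
qed

end


definition DD2 :: "nat list \<Rightarrow> bool list" where
  "DD2 ws = concat (map (\<lambda>v. [False, False] @ replicate (2*v) True) ws)"

lemma DD_DD2: "[False, False] @ DD ws = DD2 ws @ [False, False]"
  by (induction ws) (auto simp: DD_def DD2_def blk_def)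

lemma rev_DD: "rev (DD ws) = DD2 (rev ws)"
  by (simp add: DD_def DD2_def rev_concat rev_map comp_def blk_def)

context mk begin

lemma cf_eq: "markov_cf p q = concat (map cfb vs)"
  by (simp add: markov_cf_def vs_def cfb_def comp_def del: upt_Suc)

abbreviation PP :: "bool \<Rightarrow> bool list" where "PP s \<equiv> sign_pattern s (markov_cf p q)"

lemma PP_eq: "PP s = concat (map (spb s) vs)"
  by (simp add: cf_eq sp_concat_cfb)

lemma PP_cons: "PP s = s # tl (PP s)"
proof -
  obtain v ws where "vs = v # ws" using vs_len p0 by (cases vs) auto
  then show ?thesis by (simp add: PP_eq spb_def)
qed

lemma run_PP: "run False s (tl (PP s)) @ [False] = DD vs"
proof -
  have "run False (\<not>s) (PP s) = concat (map gb vs)" using PP_eq run_concat_spb vs_pos by simp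
  moreover have "run False (\<not>s) (PP s) = False # run False s (tl (PP s))"
    by (subst PP_cons) simp
  ultimately have "(False # run False s (tl (PP s))) @ [False] = False # DD vs" using gb_DD[of vs] by simp
  then show ?thesis by simp
qed

lemma run_PP_cc: "run False s (tl (PP s)) = cc"
  unfolding cc_def using run_PP[of s] by (metis butlast_snoc)

lemma cc_DD: "cc @ [False] = DD vs" using run_PP run_PP_cc by simp

lemma len_PP: "length (PP s) = Suc (length cc)"
proof -
  have "length (tl (PP s)) = length cc" using run_PP_cc[of s] run_len by metis
  then show ?thesis by (subst PP_cons) simp
qed

lemma PP_rec: "i < length cc \<Longrightarrow> cc!i = ((0 < i \<and> cc!(i-1)) \<noteq> (PP s!i = PP s!Suc i))"
proof -
  assume i: "i < length cc"
  have l: "i < length (tl (PP s))" using i len_PP[of s] by simp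
  have "run False s (tl (PP s)) ! i = ((if i = 0 then False else run False s (tl (PP s)) ! (i-1)) \<noteq>
      ((s # tl (PP s)) ! i = tl (PP s) ! i))" by (rule run_nth[OF l])
  moreover have "tl (PP s) ! i = PP s ! Suc i" using l by (simp add: nth_tl)
  ultimately show ?thesis using run_PP_cc[of s] PP_cons[of s] by auto
qed

lemma cc_pos: "0 < length cc" using cc_len aap by simp

lemma cf_pos: "\<forall>x\<in>set (markov_cf p q). 0 < x" by (auto simp: cf_eq cfb_def)

lemma sum_cf: "sum_list (markov_cf p q) = Suc (length cc)"
  using sp_len[of True "markov_cf p q"] len_PP[of True] by simp

lemma existence: "\<exists>ts. markov_snake p q ts"
proof -
  let ?s = "f0 (south (0,0))"
  have "\<exists>ts f ed. snake ts \<and> length ts = length cc \<and> sign_function ts f \<and>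
     ed \<in> {north (last ts), east (last ts)} \<and> map f (edge_seq ts ed) = PP ?s"
  proof (rule exist_walk)
    show "0 < length cc" by (rule cc_pos)
    show "cc ! (length cc - 1) = False" by (rule cc_last)
    show "length (PP ?s) = Suc (length cc)" by (rule len_PP)
    show "PP ?s ! 0 = ?s" by (subst PP_cons) simp
    show "(PP ?s ! i = PP ?s ! Suc i) = (cc ! i \<noteq> (0 < i \<and> cc ! (i - 1)))" if "i < length cc" for i
      using PP_rec[OF that, of ?s] by auto
  qed
  then obtain ts f ed where "snake ts" "length ts = length cc" "sign_function ts f"
     "ed \<in> {north (last ts), east (last ts)}" "map f (edge_seq ts ed) = PP ?s" by blast
  then have "markov_snake p q ts"
    unfolding markov_snake_def is_snake_of_cf_def using cf_pos sum_cf cc_pos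
    by (intro conjI exI[of _ f] exI[of _ ed] exI[of _ ?s]) (auto simp: Suc_le_eq)
  then show ?thesis by blast
qed

lemma walk_of: assumes "markov_snake p q ts" shows "walk ts cc"
proof -
  from assms obtain f ed s where sn: "snake ts" and len: "length ts = sum_list (markov_cf p q) - 1"
    and sf: "sign_function ts f" and ed: "ed \<in> {north (last ts), east (last ts)}"
    and mp: "map f (edge_seq ts ed) = PP s"
    unfolding markov_snake_def is_snake_of_cf_def by blast
  have len': "length ts = length cc" using len sum_cf by simp
  have rec: "\<And>i. i < length ts \<Longrightarrow> cc!i = ((0 < i \<and> cc!(i-1)) \<noteq> (PP s!i = PP s!Suc i))"
    using PP_rec len' by simp
  have cdc: "cd ts ed i = cc!i" if "i < length ts" for i
    by (rule cd_unique[OF sn sf ed mp rec that])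
  show ?thesis
  proof
    show "length ts = length cc" by fact
    show "0 < length cc" by (rule cc_pos)
    show "cc ! (length cc - 1) = False" by (rule cc_last)
    show "ts ! Suc i = stepf (cc ! i) (ts ! i)" if "Suc i < length ts" for i
      using snake_step[OF sn that, of ed] cdc[of i] that by simp
  qed
qed

lemma cc_pal: "Suc i < length cc \<Longrightarrow> cc ! (length cc - 2 - i) = cc ! i"
proof -
  assume i: "Suc i < length cc"
  define L where "L = butlast cc"
  have ne: "cc \<noteq> []" using cc_pos by simp
  have "last cc = False" using cc_last ne by (simp add: last_conv_nth)
  then have ccL: "cc = L @ [False]"
    using append_butlast_last_id[OF ne] unfolding L_def by simp
  have LD: "L @ [False, False] = DD vs" using cc_DD ccL by simp
  have "[False, False] @ L @ [False, False] = DD2 vs @ [False, False]"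
    using DD_DD2[of vs] LD by simp
  then have l2: "[False, False] @ L = DD2 vs" by simp
  have "rev (L @ [False, False]) = DD2 vs" using LD rev_DD vs_rev by simp
  then have "[False, False] @ rev L = [False, False] @ L" using l2 by simp
  then have rL: "rev L = L" by simp
  have lL: "length L = length cc - 1" by (simp add: L_def)
  have "L ! (length L - Suc i) = rev L ! i" using i lL by (simp add: rev_nth)
  then have "L ! (length L - Suc i) = L ! i" using rL by simp
  moreover have "cc ! (length cc - 2 - i) = L ! (length L - Suc i)"
    using i lL by (simp add: L_def nth_butlast)
  moreover have "cc ! i = L ! i" using i lL by (simp add: L_def nth_butlast)
  ultimately show ?thesis by simp
qed

lemma aa_strict: "k < k' \<Longrightarrow> k' \<le> p \<Longrightarrow> aa k < aa k'"
  using aa_mono[of "Suc k" k'] aa_Suc[of k] aa_lt_bb[of k] by simp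

lemma bb_strict: "k < k' \<Longrightarrow> k' < p \<Longrightarrow> bb k < bb k'"
  using aa_mono[of "Suc k" k'] aa_Suc[of k] aa_lt_bb[of k'] by simp

lemma main_props: assumes "markov_snake p q ts"
  shows "rotationally_symmetric_at_tile ts \<and>
       card (hsegments ts) = p \<and>
       (\<exists>\<nu> :: nat \<Rightarrow> nat.
          (\<forall>i\<in>{1..p}. 0 < \<nu> i) \<and>
          (\<forall>i\<in>{1..p}. \<forall>j\<in>{1..p}. i \<noteq> j \<longrightarrow> \<bar>int (\<nu> i) - int (\<nu> j)\<bar> \<le> 1) \<and>
          (\<forall>i\<in>{1..p}. seg_tiles (seg_list (hsegments ts) ! (i - 1)) = 2 * (\<nu> i - 1) + 3)) \<and>
       card (vsegments ts) = p - 1 \<and>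
       (\<forall>s\<in>vsegments ts. seg_tiles s = 3)"
proof -
  have w: "walk ts cc" by (rule walk_of[OF assms])
  have sym: "rotationally_symmetric_at_tile ts"
  proof (rule walk.sym[OF w])
    show "Suc i < length cc \<Longrightarrow> cc ! (length cc - 2 - i) = cc ! i" for i by (rule cc_pal)
    show "length cc = 2 * (p + q - 2) + 1" using cc_len pq p0 by (simp add: aa_def)
  qed
  define h where "h = (\<lambda>k. (aa k, bb k))"
  have hs: "hsegments ts = set (map h [0..<p])" using hseg_eq[OF w] by (auto simp: h_def)
  have sw: "sorted_wrt (<) (map h [0..<p])"
    unfolding sorted_wrt_map
    by (rule sorted_wrt_mono_rel[OF _ sorted_wrt_upt]) (auto simp: h_def aa_strict)
  then have sl: "seg_list (hsegments ts) = map h [0..<p]"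
    unfolding seg_list_def hs sorted_list_of_set_sort_remdups strict_sorted_iff
    by (simp add: distinct_remdups_id sorted_sort_id)
  have ch: "card (hsegments ts) = p"
    using distinct_card[of "map h [0..<p]"] sw hs by (simp add: strict_sorted_iff)
  have inj2: "inj_on (\<lambda>k. (bb k, aa (Suc k))) {..<p-1}"
  proof (rule inj_onI)
    fix x y assume "x \<in> {..<p-1}" "y \<in> {..<p-1}" "(bb x, aa (Suc x)) = (bb y, aa (Suc y))"
    moreover have "x < p" "y < p" using calculation by auto
    ultimately show "x = y" using bb_strict[of x y] bb_strict[of y x] by (cases x y rule: linorder_cases) auto
  qed
  have cv: "card (vsegments ts) = p - 1"
    using vseg_eq[OF w] card_image[OF inj2] by simp
  have v3: "\<forall>s\<in>vsegments ts. seg_tiles s = 3"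
    using vseg_eq[OF w] aa_Suc by (auto simp: seg_tiles_def)
  have nu: "\<exists>\<nu> :: nat \<Rightarrow> nat.
          (\<forall>i\<in>{1..p}. 0 < \<nu> i) \<and>
          (\<forall>i\<in>{1..p}. \<forall>j\<in>{1..p}. i \<noteq> j \<longrightarrow> \<bar>int (\<nu> i) - int (\<nu> j)\<bar> \<le> 1) \<and>
          (\<forall>i\<in>{1..p}. seg_tiles (seg_list (hsegments ts) ! (i - 1)) = 2 * (\<nu> i - 1) + 3)"
  proof (intro exI[of _ "markov_v p q"] conjI ballI impI)
    fix i assume "i \<in> {1..p}"
    then show "0 < markov_v p q i" using v_pos by simp
  next
    fix i j assume ij: "i \<in> {1..p}" "j \<in> {1..p}" "i \<noteq> j"
    then have "2 \<le> p" by auto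
    then show "\<bar>int (markov_v p q i) - int (markov_v p q j)\<bar> \<le> 1"
      using v_range[of i] v_range[of j] ij by auto
  next
    fix i assume i: "i \<in> {1..p}"
    then have "i - 1 < p" by auto
    then have "seg_list (hsegments ts) ! (i - 1) = h (i - 1)" using sl by simp
    moreover have "markov_v p q i = g i - g (i-1)" using v_eq i by simp
    moreover have "g (i-1) < g i" using g_strict[of "i-1" i] i by simp
    ultimately show "seg_tiles (seg_list (hsegments ts) ! (i - 1)) = 2 * (markov_v p q i - 1) + 3"
      using i by (simp add: seg_tiles_def h_def aa_def bb_def)
  qed
  show ?thesis using sym ch nu cv v3 by blast
qed

end


theorem corollary4p2:
  fixes p q :: nat
  assumes "0 < p" and "p < q" and "coprime p q"
  shows "(\<exists>ts. markov_snake p q ts) \<and>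
    (\<forall>ts. markov_snake p q ts \<longrightarrow>
       rotationally_symmetric_at_tile ts \<and>
       card (hsegments ts) = p \<and>
       (\<exists>\<nu> :: nat \<Rightarrow> nat.
          (\<forall>i\<in>{1..p}. 0 < \<nu> i) \<and>
          (\<forall>i\<in>{1..p}. \<forall>j\<in>{1..p}. i \<noteq> j \<longrightarrow> \<bar>int (\<nu> i) - int (\<nu> j)\<bar> \<le> 1) \<and>
          (\<forall>i\<in>{1..p}. seg_tiles (seg_list (hsegments ts) ! (i - 1)) = 2 * (\<nu> i - 1) + 3)) \<and>
       card (vsegments ts) = p - 1 \<and>
       (\<forall>s\<in>vsegments ts. seg_tiles s = 3))"
proof -
  interpret mk p q using assms by unfold_locales
  show ?thesis using existence main_props by blast
qed

end
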